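(* Let $(G_k)_{k\in\mathbb Z}$ be a gibonacci sequence and let $F_k$ denote the Fibonacci numbers. Let $r$, $n$, $t$, $m$ be integers with $r\ge1$, $n\ge 1$, such that $G_k\neq0$ for all $k$ with $t+1\le k\le n+t+r$. Then \begin{equation*} F_r \sum_{j = 1}^n \frac{(-1)^{rj} F_m^{n - j} F_{m - r}^{j - 1} G_{j + t + m}}{G_{j + t} G_{j + t + 1} \cdots G_{j + t + r}} = \frac{(-1)^{r(n - 1) + 1} F_{m - r}^n}{G_{n + t + 1} G_{n + t + 2} \cdots G_{n + t + r}} + \frac{(-1)^r F_m^n}{G_{t + 1} G_{t + 2} \cdots G_{t + r}}. \end{equation*}
   Context: A gibonacci sequence $(G_k)_{k\in\mathbb Z}$ is defined by arbitrary initial values $G_0=a$, $G_1=b$ (numbers, not both zero) and $G_k=G_{k-1}+G_{k-2}$ for all integers $k$. The Fibonacci numbers $F_k$ are the gibonacci sequence with $F_0=0$, $F_1=1$, extended to all integer indices by the same recurrence. The convention $0^0=1$ is used for powers. *)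

theory Defs
  imports Complex_Main
begin

definition is_gibonacci :: "(int \<Rightarrow> real) \<Rightarrow> bool" where
  "is_gibonacci G \<longleftrightarrow> (\<forall>k. G k = G (k - 1) + G (k - 2)) \<and> \<not> (G 0 = 0 \<and> G 1 = 0)"

definition fibz :: "int \<Rightarrow> real" where
  "fibz = (THE f. f 0 = 0 \<and> f 1 = 1 \<and> (\<forall>k. f k = f (k - 1) + f (k - 2)))"

end

theory Submission
  imports Defs
begin

definition recz :: "(int \<Rightarrow> real) \<Rightarrow> bool" where
  "recz f \<longleftrightarrow> (\<forall>k. f k = f (k - 1) + f (k - 2))"

lemma recz_zero:
  assumes "recz h" "h 0 = 0" "h 1 = 0"
  shows "h k = 0"
proof -
  have rec: "\<And>k. h k = h (k - 1) + h (k - 2)" using assms(1) unfolding recz_def by blast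
  have up: "h (int i) = 0 \<and> h (int i + 1) = 0" for i :: nat
  proof (induction i)
    case 0 then show ?case using assms by simp
  next
    case (Suc i)
    have e: "int i + 2 - 1 = int i + 1" "int i + 2 - 2 = int i" by simp_all
    have "h (int i + 2) = h (int i + 1) + h (int i)" using rec[of "int i + 2"] by (simp only: e)
    then show ?case using Suc by (simp add: add.commute)
  qed
  have down: "h (- int i) = 0 \<and> h (- int i + 1) = 0" for i :: nat
  proof (induction i)
    case 0 then show ?case using assms by simp
  next
    case (Suc i)
    have e: "- int i + 1 - 1 = - int i" "- int i + 1 - 2 = - int i - 1" by simp_all
    have "h (- int i + 1) = h (- int i) + h (- int i - 1)" using rec[of "- int i + 1"] by (simp only: e)
    moreover have e2: "- int (Suc i) = - int i - 1" "- int i - 1 + 1 = - int i" by simp_all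
    ultimately have "h (- int i - 1) = 0" using Suc by linarith
    then show ?case unfolding e2 using Suc by blast
  qed
  show ?thesis
  proof (cases "k \<ge> 0")
    case True then show ?thesis using up[of "nat k"] by simp
  next
    case False then show ?thesis using down[of "nat (-k)"] by simp
  qed
qed

lemma recz_unique:
  assumes "recz f" "recz g" "f 0 = g 0" "f 1 = g 1"
  shows "f = g"
proof
  fix k
  have "recz (\<lambda>k. f k - g k)" unfolding recz_def
  proof
    fix k
    have "f k = f (k - 1) + f (k - 2)" "g k = g (k - 1) + g (k - 2)"
      using assms(1,2) unfolding recz_def by blast+
    then show "f k - g k = (f (k - 1) - g (k - 1)) + (f (k - 2) - g (k - 2))" by linarith
  qed
  then have "f k - g k = 0" using recz_zero[of "\<lambda>k. f k - g k"] assms(3,4) by simp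
  then show "f k = g k" by simp
qed

definition phi :: real where "phi = (1 + sqrt 5) / 2"
definition psi :: real where "psi = (1 - sqrt 5) / 2"

lemma powi_rec:
  fixes x :: real
  assumes "x ^ 2 = x + 1"
  shows "x powi k = x powi (k - 1) + x powi (k - 2)"
proof -
  have x0: "x \<noteq> 0" using assms by auto
  have "x powi k = x powi (k - 2) * x powi 2" using power_int_add[of x "k - 2" 2] x0 by simp
  moreover have "x powi (k - 1) = x powi (k - 2) * x powi 1" using power_int_add[of x "k - 2" 1] x0 by simp
  ultimately show ?thesis using assms by (simp add: algebra_simps)
qed

lemma phi_sq: "phi ^ 2 = phi + 1" unfolding phi_def by (simp add: power2_eq_square algebra_simps field_simps)
lemma psi_sq: "psi ^ 2 = psi + 1" unfolding psi_def by (simp add: power2_eq_square algebra_simps field_simps)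

definition fb :: "int \<Rightarrow> real" where "fb k = (phi powi k - psi powi k) / sqrt 5"

lemma fb_props: "fb 0 = 0" "fb 1 = 1" "recz fb"
proof -
  show "fb 0 = 0" unfolding fb_def by simp
  show "fb 1 = 1" unfolding fb_def phi_def psi_def by (simp add: field_simps)
  show "recz fb" unfolding recz_def fb_def
  proof
    fix k
    have "phi powi k - psi powi k = (phi powi (k-1) - psi powi (k-1)) + (phi powi (k-2) - psi powi (k-2))"
      using powi_rec[OF phi_sq, of k] powi_rec[OF psi_sq, of k] by linarith
    then show "(phi powi k - psi powi k) / sqrt 5 = (phi powi (k-1) - psi powi (k-1)) / sqrt 5 + (phi powi (k-2) - psi powi (k-2)) / sqrt 5"
      by (simp add: add_divide_distrib[symmetric])
  qed
qed

lemma fibz_eq: "fibz = fb"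
proof -
  have "(THE f. f 0 = 0 \<and> f 1 = 1 \<and> (\<forall>k. f k = f (k - 1) + f (k - 2))) = fb"
  proof (rule the_equality)
    show "fb 0 = 0 \<and> fb 1 = 1 \<and> (\<forall>k. fb k = fb (k - 1) + fb (k - 2))"
      using fb_props unfolding recz_def by blast
  next
    fix f :: "int \<Rightarrow> real" assume H: "f 0 = 0 \<and> f 1 = 1 \<and> (\<forall>k. f k = f (k - 1) + f (k - 2))"
    then have "recz f" unfolding recz_def by blast
    moreover have "f 0 = fb 0" "f 1 = fb 1" using H fb_props(1,2) by argo+
    ultimately show "f = fb" using recz_unique[of f fb] fb_props(3) by blast
  qed
  then show ?thesis unfolding fibz_def by (rule HOL.trans[OF refl])
qed

lemma fibz_rec: "recz fibz" and fibz0: "fibz 0 = 0" and fibz1: "fibz 1 = 1"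
  unfolding fibz_eq using fb_props by blast+

lemma fibz_m1: "fibz (-1) = 1"
proof -
  have "fibz 1 = fibz (1 - 1) + fibz (1 - 2)" using fibz_rec unfolding recz_def by blast
  then show ?thesis using fibz0 fibz1 by simp
qed

lemma shift_formula:
  assumes "recz G"
  shows "G (a + k) = G a * fibz (k - 1) + G (a + 1) * fibz k"
proof -
  have "(\<lambda>k. G (a + k)) = (\<lambda>k. G a * fibz (k - 1) + G (a + 1) * fibz k)"
  proof (rule recz_unique)
    show "recz (\<lambda>k. G (a + k))" unfolding recz_def
    proof
      fix k
      have e: "a + (k - 1) = a + k - 1" "a + (k - 2) = a + k - 2" by simp_all
      show "G (a + k) = G (a + (k - 1)) + G (a + (k - 2))"
        unfolding e using assms unfolding recz_def by blast
    qed
    show "recz (\<lambda>k. G a * fibz (k - 1) + G (a + 1) * fibz k)" unfolding recz_def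
    proof
      fix k :: int
      have r: "\<And>k. fibz k = fibz (k - 1) + fibz (k - 2)" using fibz_rec unfolding recz_def by blast
      have e: "k - 1 - 1 = k - 2" "k - 1 - 2 = k - 2 - 1" by simp_all
      have f1: "fibz (k - 1) = fibz (k - 2) + fibz (k - 2 - 1)" using r[of "k - 1"] unfolding e .
      show "G a * fibz (k - 1) + G (a + 1) * fibz k =
        (G a * fibz (k - 1 - 1) + G (a + 1) * fibz (k - 1)) + (G a * fibz (k - 2 - 1) + G (a + 1) * fibz (k - 2))"
        unfolding e using f1 r[of k] by (simp add: distrib_left)
    qed
    show "G (a + 0) = G a * fibz (0 - 1) + G (a + 1) * fibz 0" using fibz_m1 fibz0 by simp
    show "G (a + 1) = G a * fibz (1 - 1) + G (a + 1) * fibz 1" using fibz0 fibz1 by simp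
  qed
  then show ?thesis by (rule fun_cong)
qed

lemma fibz_neg: "fibz (- int k) = (-1) ^ (k + 1) * fibz (int k)"
proof -
  have rec: "\<And>k. fibz k = fibz (k - 1) + fibz (k - 2)" using fibz_rec unfolding recz_def by blast
  have "fibz (- int k) = (-1) ^ (k + 1) * fibz (int k) \<and>
        fibz (- int k - 1) = (-1) ^ (k + 2) * fibz (int k + 1)"
  proof (induction k)
    case 0 then show ?case using fibz0 fibz1 fibz_m1 by simp
  next
    case (Suc k)
    have a: "fibz (- int k) = fibz (- int k - 1) + fibz (- int k - 2)" using rec[of "- int k"] by simp
    have e: "int k + 2 - 1 = int k + 1" "int k + 2 - 2 = int k" by simp_all
    have b: "fibz (int k + 2) = fibz (int k + 1) + fibz (int k)" using rec[of "int k + 2"] by (simp only: e)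
    define c :: real where "c = (-1) ^ (k + 1)"
    have s2: "(-1) ^ (k + 2) = - c" "(-1) ^ (k + 3) = c" "(-1) ^ (Suc k + 1) = - c" "(-1) ^ (Suc k + 2) = c"
      unfolding c_def by (simp_all add: power_add)
    have h1: "fibz (- int k) = c * fibz k" using Suc unfolding c_def by simp
    have h2: "fibz (- int k - 1) = - c * fibz (int k + 1)" using Suc unfolding s2(1) by simp
    have "fibz (- int k) - fibz (- int k - 1) = c * fibz k + c * fibz (int k + 1)" unfolding h1 h2 by simp
    also have "... = c * fibz (int k + 2)" using b by (simp add: distrib_left)
    finally have n2: "fibz (- int k - 2) = c * fibz (int k + 2)" using a by simp
    have e3: "int (Suc k) = int k + 1" "- (int k + 1) = - int k - 1" "- int k - 1 - 1 = - int k - 2"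
      "int k + 1 + 1 = int k + 2" by simp_all
    show ?case unfolding e3 s2 using n2 h2 by blast
  qed
  then show ?thesis by blast
qed

lemma docagne:
  "fibz m * fibz (int R - 1) - fibz (int R) * fibz (m - 1) = (-1) ^ R * fibz (m - int R)"
proof -
  have "fibz (- int R + (m)) = fibz (- int R) * fibz (m - 1) + fibz (- int R + 1) * fibz m"
    using shift_formula[OF fibz_rec, of "- int R" m] by simp
  moreover have "fibz (- int R) = (-1) ^ (R + 1) * fibz (int R)" by (rule fibz_neg)
  moreover have "fibz (- int R + 1) = (-1) ^ R * fibz (int R - 1)"
  proof (cases R)
    case 0 then show ?thesis using fibz_m1 fibz1 by simp
  next
    case (Suc R')
    then show ?thesis using fibz_neg[of R'] by (simp add: algebra_simps)
  qed
  ultimately have "fibz (m - int R) = (-1) ^ R * (fibz m * fibz (int R - 1) - fibz (int R) * fibz (m - 1))"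
    by (simp add: algebra_simps)
  then have "(-1) ^ R * fibz (m - int R) = ((-1) ^ R * (-1) ^ R) * (fibz m * fibz (int R - 1) - fibz (int R) * fibz (m - 1))"
    by (simp only: mult.assoc)
  also have "(-1) ^ R * (-1) ^ R = (1::real)" by (simp flip: power_add)
  finally show ?thesis by simp
qed

lemma key_identity:
  assumes "recz G"
  shows "fibz (int R) * G (a + m) = fibz m * G (a + int R) - (-1) ^ R * fibz (m - int R) * G a"
proof -
  have "G (a + m) = G a * fibz (m - 1) + G (a + 1) * fibz m" by (rule shift_formula[OF assms])
  moreover have "G (a + int R) = G a * fibz (int R - 1) + G (a + 1) * fibz (int R)" by (rule shift_formula[OF assms])
  moreover have d: "(-1) ^ R * fibz (m - int R) = fibz m * fibz (int R - 1) - fibz (int R) * fibz (m - 1)"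
    using docagne[of m R] by simp
  ultimately show ?thesis unfolding d by (simp add: algebra_simps)
qed


lemma telescope_int:
  fixes U :: "int \<Rightarrow> real"
  shows "(\<Sum>j\<in>{1..int N}. U (j - 1) - U j) = U 0 - U (int N)"
proof (induction N)
  case 0 then show ?case by simp
next
  case (Suc N)
  have "{1..int (Suc N)} = insert (int N + 1) {1..int N}" by auto
  then have "(\<Sum>j\<in>{1..int (Suc N)}. U (j - 1) - U j) = (U (int N + 1 - 1) - U (int N + 1)) + (\<Sum>j\<in>{1..int N}. U (j - 1) - U j)"
    by simp
  then show ?case using Suc by (simp add: add.commute)
qed

theorem mainTheorem8:
  fixes G :: "int \<Rightarrow> real" and r n t m :: int
  assumes "is_gibonacci G" and "r \<ge> 1" and "n \<ge> 1"
    and "\<And>k. t + 1 \<le> k \<Longrightarrow> k \<le> n + t + r \<Longrightarrow> G k \<noteq> 0"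
  shows "fibz r * (\<Sum>j\<in>{1..n}.
            (-1) ^ nat (r * j) * fibz m ^ nat (n - j) * fibz (m - r) ^ nat (j - 1) * G (j + t + m)
            / (\<Prod>i\<in>{0..nat r}. G (j + t + int i)))
       = (-1) ^ nat (r * (n - 1) + 1) * fibz (m - r) ^ nat n / (\<Prod>i\<in>{1..nat r}. G (n + t + int i))
         + (-1) ^ nat r * fibz m ^ nat n / (\<Prod>i\<in>{1..nat r}. G (t + int i))"
proof -
  have recG: "recz G" using assms(1) unfolding is_gibonacci_def recz_def by blast
  obtain R where rR: "r = int R" and R1: "R \<ge> 1" using assms(2) by (metis nonneg_int_cases order_trans zero_le_one of_nat_le_iff of_nat_1)
  obtain N where nN: "n = int N" and N1: "N \<ge> 1" using assms(3) by (metis nonneg_int_cases order_trans zero_le_one of_nat_le_iff of_nat_1)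
  obtain R' where R': "R = Suc R'" using R1 by (cases R) auto
  define E :: real where "E = (-1) ^ R"
  define A where "A = fibz m"
  define B where "B = fibz (m - int R)"
  define P where "P = (\<lambda>j. \<Prod>i\<in>{1..R}. G (j + t + int i))"
  define U where "U = (\<lambda>j. E * E ^ nat j * A ^ nat (n - j) * B ^ nat j / P j)"
  have EE: "E * E = 1" unfolding E_def by (simp flip: power_add)
  have step: "fibz r * ((-1) ^ nat (r * j) * fibz m ^ nat (n - j) * fibz (m - r) ^ nat (j - 1) * G (j + t + m)
            / (\<Prod>i\<in>{0..nat r}. G (j + t + int i))) = U (j - 1) - U j"
    if j: "j \<in> {1..n}" for j
  proof -
    obtain p where p: "j = int p + 1" using j by (metis atLeastAtMost_iff zle_iff_zadd add.commute)
    obtain q where q: "n = j + int q" using j by (metis atLeastAtMost_iff zle_iff_zadd)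
    define a where "a = j + t"
    define Q where "Q = (\<Prod>i\<in>{0..R}. G (j + t + int i))"
    have nz: "G k \<noteq> 0" if "a \<le> k" "k \<le> a + int R" for k
      using assms(4)[of k] that p q rR unfolding a_def by simp
    have Q1: "Q = G a * P j"
      unfolding Q_def P_def a_def by (subst prod.atLeast_Suc_atMost) simp_all
    have Q2: "Q = P (j - 1) * G (a + int R)"
    proof -
      have "Q = G (a + int R) * (\<Prod>i\<in>{0..R'}. G (j + t + int i))"
        unfolding Q_def R' a_def by (subst prod.nat_ivl_Suc') simp_all
      moreover have "P (j - 1) = (\<Prod>i\<in>{0..R'}. G (j + t + int i))"
      proof -
        have "P (j - 1) = (\<Prod>i\<in>{Suc 0..Suc R'}. G (j - 1 + t + int i))" unfolding P_def R' by simp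
        also have "... = (\<Prod>i\<in>{0..R'}. G (j - 1 + t + int (Suc i)))"
          by (rule prod.atLeast_Suc_atMost_Suc_shift[unfolded comp_def])
        also have "... = (\<Prod>i\<in>{0..R'}. G (j + t + int i))"
          by (rule prod.cong) (simp_all add: algebra_simps)
        finally show ?thesis .
      qed
      ultimately show ?thesis by simp
    qed
    have all: "\<forall>i\<in>{0..R}. G (j + t + int i) \<noteq> 0"
    proof
      fix i assume "i \<in> {0..R}"
      then show "G (j + t + int i) \<noteq> 0" using nz[of "j + t + int i"] unfolding a_def by simp
    qed
    have Qnz: "Q \<noteq> 0" unfolding Q_def using all by (simp add: prod_zero_iff)
    have Pj: "P j \<noteq> 0" "P (j - 1) \<noteq> 0" "G a \<noteq> 0" "G (a + int R) \<noteq> 0" using Qnz Q1 Q2 by auto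
    have key: "fibz (int R) * G (a + m) = A * G (a + int R) - E * B * G a"
      using key_identity[OF recG, of R a m] unfolding A_def B_def E_def by simp
    have "r * j = int (R * (p + 1))" using rR p by (simp add: algebra_simps)
    then have e1: "nat (r * j) = R * (p + 1)" by (simp only: nat_int)
    have e2: "nat (n - j) = q" "nat (j - 1) = p" "nat j = p + 1" "nat (n - (j - 1)) = q + 1" using p q by simp_all
    have sgn: "(-1::real) ^ nat (int R * j) = E ^ (p + 1)" using e1 unfolding rR E_def by (simp only: power_mult)
    define K where "K = E ^ (p + 1) * A ^ q * B ^ p"
    have L: "fibz r * ((-1) ^ nat (r * j) * fibz m ^ nat (n - j) * fibz (m - r) ^ nat (j - 1) * G (j + t + m)
            / (\<Prod>i\<in>{0..nat r}. G (j + t + int i))) = K * (fibz (int R) * G (a + m)) / Q"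
      unfolding sgn e2 K_def Q_def a_def A_def B_def rR by simp
    have U1: "U (j - 1) = K * (A * G (a + int R)) / Q"
      unfolding U_def K_def e2 Q2 using Pj by (simp add: field_simps)
    have U2: "U j = K * (E * B * G a) / Q"
      unfolding U_def K_def e2 Q1 using Pj by (simp add: field_simps)
    show ?thesis unfolding L U1 U2 key using Qnz by (simp add: field_simps)
  qed
  have "fibz r * (\<Sum>j\<in>{1..n}.
            (-1) ^ nat (r * j) * fibz m ^ nat (n - j) * fibz (m - r) ^ nat (j - 1) * G (j + t + m)
            / (\<Prod>i\<in>{0..nat r}. G (j + t + int i))) = (\<Sum>j\<in>{1..n}. U (j - 1) - U j)"
    unfolding sum_distrib_left using step by (rule sum.cong[OF refl])
  also have "... = U 0 - U n" unfolding nN by (rule telescope_int)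
  finally have main: "fibz r * (\<Sum>j\<in>{1..n}.
            (-1) ^ nat (r * j) * fibz m ^ nat (n - j) * fibz (m - r) ^ nat (j - 1) * G (j + t + m)
            / (\<Prod>i\<in>{0..nat r}. G (j + t + int i))) = U 0 - U n" .
  have h0: "U 0 = (-1) ^ nat r * fibz m ^ nat n / (\<Prod>i\<in>{1..nat r}. G (t + int i))"
    unfolding U_def P_def E_def A_def rR by simp
  have hn: "- U n = (-1) ^ nat (r * (n - 1) + 1) * fibz (m - r) ^ nat n / (\<Prod>i\<in>{1..nat r}. G (n + t + int i))"
  proof -
    obtain Nm where Nm: "N = Suc Nm" using N1 by (cases N) auto
    have "int R * (n - 1) + 1 = int (R * Nm + 1)" using nN Nm by simp
    then have "nat (int R * (n - 1) + 1) = R * Nm + 1" by (simp only: nat_int)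
    then have s1: "(-1::real) ^ nat (int R * (n - 1) + 1) = - (E ^ Nm)" unfolding E_def by (simp add: power_mult)
    have nn: "nat n = Suc Nm" using nN Nm by simp
    have s2: "E * E ^ nat n = E ^ Nm" unfolding nn power_Suc mult.assoc[symmetric] EE by simp
    show ?thesis unfolding U_def P_def B_def s1 rR
      using s2 by (simp add: mult.assoc[symmetric])
  qed
  show ?thesis unfolding main h0[symmetric] hn[symmetric] by simp
qed

end
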